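(* For every $n\ge 4$, the triangular graph $T_n$ is not eigensharp; that is, $N(T_n)\ge n$.
   Context: The triangular graph $T_n$ is the line graph of the complete graph $K_n$ (vertices are the 2-subsets of $\{1,\dots,n\}$, adjacent iff they intersect). A $t$-address is a $t$-tuple with entries in $\{0,a,b\}$ (three distinct symbols). An addressing of length $t$ of a connected graph $G$ is an assignment of $t$-addresses to the vertices such that for any two vertices $u,v$, the graph distance $d(u,v)$ equals the number of coordinates in which one of the two addresses equals $a$ and the other equals $b$. $N(G)$ is the minimum such $t$. With $D(G)$ the distance matrix of $G$ and $n_\pm(D(G))$ its numbers of positive/negative eigenvalues, one always has $N(G)\ge\max(n_+(D(G)),n_-(D(G)))$; $G$ is called eigensharp if equality holds. For $n\ge 4$, $D(T_n)$ has spectrum $(n-1)(n-2)$ (multiplicity 1), $2-n$ (multiplicity $n-1$), and $0$ (multiplicity $\binom n2-n$), so $\max(n_+(D(T_n)),n_-(D(T_n)))=n-1$. *)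

theory Defs
  imports Main "HOL-Library.Extended_Nat"
begin

definition adj_rel :: "'v set \<Rightarrow> ('v \<Rightarrow> 'v \<Rightarrow> bool) \<Rightarrow> ('v \<times> 'v) set" where
  "adj_rel V E = {(x, y). x \<in> V \<and> y \<in> V \<and> E x y}"

definition graph_dist :: "'v set \<Rightarrow> ('v \<Rightarrow> 'v \<Rightarrow> bool) \<Rightarrow> 'v \<Rightarrow> 'v \<Rightarrow> nat" where
  "graph_dist V E u v = (LEAST k. (u, v) \<in> adj_rel V E ^^ k)"

datatype addr_sym = Zero | SymA | SymB

definition addr_dist :: "nat \<Rightarrow> addr_sym list \<Rightarrow> addr_sym list \<Rightarrow> nat" where
  "addr_dist t x y = card {i. i < t \<and> ((x ! i = SymA \<and> y ! i = SymB) \<or> (x ! i = SymB \<and> y ! i = SymA))}"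

definition is_addressing :: "'v set \<Rightarrow> ('v \<Rightarrow> 'v \<Rightarrow> bool) \<Rightarrow> nat \<Rightarrow> ('v \<Rightarrow> addr_sym list) \<Rightarrow> bool" where
  "is_addressing V E t f \<longleftrightarrow>
     (\<forall>v\<in>V. length (f v) = t) \<and>
     (\<forall>u\<in>V. \<forall>v\<in>V. graph_dist V E u v = addr_dist t (f u) (f v))"

text \<open>N(G): minimum length of an addressing (\<infinity> if none existed).\<close>
definition addressing_number :: "'v set \<Rightarrow> ('v \<Rightarrow> 'v \<Rightarrow> bool) \<Rightarrow> enat" where
  "addressing_number V E = (INF t \<in> {t. \<exists>f. is_addressing V E t f}. enat t)"

text \<open>Triangular graph T_n = line graph of K_n.\<close>
definition tri_V :: "nat \<Rightarrow> nat set set" where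
  "tri_V n = {e. e \<subseteq> {1..n} \<and> card e = 2}"

definition tri_E :: "nat set \<Rightarrow> nat set \<Rightarrow> bool" where
  "tri_E u v \<longleftrightarrow> u \<noteq> v \<and> u \<inter> v \<noteq> {}"

end

theory Submission
  imports Defs
begin

lemma homog_solve:
  fixes L :: "'i \<Rightarrow> 'j \<Rightarrow> real"
  assumes "finite I" "finite J" "card I < card J"
  shows "\<exists>c. (\<exists>j\<in>J. c j \<noteq> 0) \<and> (\<forall>i\<in>I. (\<Sum>j\<in>J. L i j * c j) = 0)"
  using assms
proof (induction I arbitrary: J L rule: finite_induct)
  case empty
  then have "J \<noteq> {}" by auto
  then obtain j where "j \<in> J" by auto
  then show ?case by (intro exI[of _ "\<lambda>_. 1"]) auto
next
  case (insert i I)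
  have cI: "card (insert i I) = Suc (card I)" using insert by simp
  show ?case
  proof (cases "\<forall>j\<in>J. L i j = 0")
    case True
    have "card I < card J" using insert cI by simp
    from insert.IH[OF insert.prems(1) this] obtain c where
      c: "\<exists>j\<in>J. c j \<noteq> 0" "\<forall>k\<in>I. (\<Sum>j\<in>J. L k j * c j) = 0" by blast
    show ?thesis using c True by (intro exI[of _ c]) auto
  next
    case False
    then obtain j0 where j0: "j0 \<in> J" "L i j0 \<noteq> 0" by auto
    define J' where "J' = J - {j0}"
    define L' where "L' k j = L k j - L k j0 * L i j / L i j0" for k j
    have fJ': "finite J'" using insert J'_def by simp
    have "card J' = card J - 1" using j0 insert J'_def by simp
    then have "card I < card J'" using insert cI by simp
    from insert.IH[OF fJ' this, of L'] obtain c' where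
      c': "\<exists>j\<in>J'. c' j \<noteq> 0" "\<forall>k\<in>I. (\<Sum>j\<in>J'. L' k j * c' j) = 0" by blast
    define c where "c j = (if j = j0 then - (\<Sum>j\<in>J'. L i j * c' j) / L i j0 else c' j)" for j
    have split: "(\<Sum>j\<in>J. L k j * c j) = L k j0 * c j0 + (\<Sum>j\<in>J'. L k j * c' j)" for k
    proof -
      have "(\<Sum>j\<in>J. L k j * c j) = L k j0 * c j0 + (\<Sum>j\<in>J'. L k j * c j)"
        unfolding J'_def using j0 insert by (simp add: sum.remove)
      also have "(\<Sum>j\<in>J'. L k j * c j) = (\<Sum>j\<in>J'. L k j * c' j)"
        by (rule sum.cong) (auto simp: c_def J'_def)
      finally show ?thesis .
    qed
    have nz: "\<exists>j\<in>J. c j \<noteq> 0" using c' by (auto simp: c_def J'_def)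
    have eqs: "\<forall>k\<in>insert i I. (\<Sum>j\<in>J. L k j * c j) = 0"
    proof
      fix k assume k: "k \<in> insert i I"
      show "(\<Sum>j\<in>J. L k j * c j) = 0"
      proof (cases "k = i")
        case True
        then show ?thesis using split[of k] j0 by (simp add: c_def)
      next
        case False
        then have kI: "k \<in> I" using k by auto
        have "(\<Sum>j\<in>J'. L' k j * c' j) = (\<Sum>j\<in>J'. L k j * c' j) - L k j0 / L i j0 * (\<Sum>j\<in>J'. L i j * c' j)"
          by (simp add: L'_def sum_subtractf sum_distrib_left algebra_simps)
        then have "(\<Sum>j\<in>J'. L k j * c' j) = L k j0 / L i j0 * (\<Sum>j\<in>J'. L i j * c' j)"
          using c'(2) kI by simp
        then show ?thesis using split[of k] j0 by (simp add: c_def)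
      qed
    qed
    show ?thesis using nz eqs by blast
  qed
qed


lemma V_mem: "u \<in> tri_V n \<Longrightarrow> finite u \<and> card u = 2 \<and> u \<subseteq> {1..n}"
  unfolding tri_V_def by (auto intro: card_ge_0_finite)

lemma pair_V: "p \<in> {1..n} \<Longrightarrow> q \<in> {1..n} \<Longrightarrow> p \<noteq> q \<Longrightarrow> {p, q} \<in> tri_V n"
  unfolding tri_V_def by auto

lemma finite_V: "finite (tri_V n)"
proof -
  have "tri_V n \<subseteq> Pow {1..n}" unfolding tri_V_def by auto
  then show ?thesis by (rule finite_subset) simp
qed

lemma dist_tri:
  assumes u: "u \<in> tri_V n" and v: "v \<in> tri_V n"
  shows "graph_dist (tri_V n) tri_E u v = 2 - card (u \<inter> v)"
proof -
  let ?R = "adj_rel (tri_V n) tri_E"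
  have fu: "finite u" "card u = 2" "u \<subseteq> {1..n}" using V_mem[OF u] by auto
  have fv: "finite v" "card v = 2" "v \<subseteq> {1..n}" using V_mem[OF v] by auto
  have R1: "(x, y) \<in> ?R ^^ 1 \<longleftrightarrow> (x, y) \<in> ?R" for x y by simp
  show ?thesis
  proof (cases "u = v")
    case True
    then show ?thesis using fu by (simp add: graph_dist_def)
  next
    case neq: False
    show ?thesis
    proof (cases "u \<inter> v = {}")
      case False
      have c1: "card (u \<inter> v) = 1"
      proof -
        have le: "card (u \<inter> v) \<le> 2" using fu card_mono[of u "u \<inter> v"] by auto
        have "card (u \<inter> v) \<noteq> 0" using False fu by auto
        moreover have "card (u \<inter> v) \<noteq> 2"
        proof
          assume h: "card (u \<inter> v) = 2"
          have "u \<inter> v = u" using card_subset_eq[of u "u \<inter> v"] fu h by auto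
          moreover have "u \<inter> v = v" using card_subset_eq[of v "u \<inter> v"] fv h by auto
          ultimately show False using neq by auto
        qed
        ultimately show ?thesis using le by linarith
      qed
      have adj: "(u, v) \<in> ?R" using u v neq False by (simp add: adj_rel_def tri_E_def)
      have "graph_dist (tri_V n) tri_E u v = 1"
        unfolding graph_dist_def
      proof (rule Least_equality)
        show "(u, v) \<in> ?R ^^ 1" using adj by simp
      next
        fix k assume "(u, v) \<in> ?R ^^ k"
        then show "1 \<le> k" using neq by (cases k) auto
      qed
      then show ?thesis using c1 by simp
    next
      case True
      obtain p where p: "p \<in> u" using fu by (metis card.empty ex_in_conv zero_neq_numeral)
      obtain r where r: "r \<in> v" using fv by (metis card.empty ex_in_conv zero_neq_numeral)
      have pr: "p \<noteq> r" using p r True by auto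
      have "p \<in> {1..n}" "r \<in> {1..n}" using p r fu fv by auto
      then have w: "{p, r} \<in> tri_V n" using pair_V[of p n r] pr by auto
      have a1: "(u, {p, r}) \<in> ?R" using u w p r True by (auto simp: adj_rel_def tri_E_def)
      have a2: "({p, r}, v) \<in> ?R" using v w p r True by (auto simp: adj_rel_def tri_E_def)
      have "graph_dist (tri_V n) tri_E u v = 2"
        unfolding graph_dist_def
      proof (rule Least_equality)
        show "(u, v) \<in> ?R ^^ 2" using a1 a2 by (auto simp: numeral_2_eq_2)
      next
        fix k assume k: "(u, v) \<in> ?R ^^ k"
        show "2 \<le> k"
        proof (rule ccontr)
          assume "\<not> 2 \<le> k"
          then have "k = 0 \<or> k = 1" by auto
          then show False using k neq True by (auto simp: adj_rel_def tri_E_def)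
        qed
      qed
      then show ?thesis using True by simp
    qed
  qed
qed

definition ia :: "addr_sym \<Rightarrow> real" where "ia s = (if s = SymA then 1 else 0)"
definition ib :: "addr_sym \<Rightarrow> real" where "ib s = (if s = SymB then 1 else 0)"

lemma addr_dist_sum:
  "real (addr_dist t x y) = (\<Sum>i<t. ia (x!i) * ib (y!i) + ib (x!i) * ia (y!i))"
proof -
  let ?P = "\<lambda>i. (x ! i = SymA \<and> y ! i = SymB) \<or> (x ! i = SymB \<and> y ! i = SymA)"
  have eq: "{i. i < t \<and> ?P i} = {i \<in> {..<t}. ?P i}" by auto
  have "real (addr_dist t x y) = real (card {i \<in> {..<t}. ?P i})"
    unfolding addr_dist_def eq by simp
  also have "\<dots> = (\<Sum>i\<in>{i \<in> {..<t}. ?P i}. 1)" by simp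
  also have "\<dots> = (\<Sum>i<t. if ?P i then 1 else 0)"
    by (simp only: sum.inter_filter[OF finite_lessThan])
  also have "\<dots> = (\<Sum>i<t. ia (x!i) * ib (y!i) + ib (x!i) * ia (y!i))"
    by (rule sum.cong) (auto simp: ia_def ib_def)
  finally show ?thesis .
qed

definition dl :: "nat set \<Rightarrow> nat set \<Rightarrow> real" where "dl w u = (if u = w then 1 else 0)"

lemma sum_dl: "finite V \<Longrightarrow> w \<in> V \<Longrightarrow> (\<Sum>u\<in>V. h u * dl w u) = h w"
proof -
  assume "finite V" "w \<in> V"
  have "(\<Sum>u\<in>V. h u * dl w u) = (\<Sum>u\<in>V. if u = w then h u else 0)"
    by (rule sum.cong) (auto simp: dl_def)
  then show ?thesis using \<open>finite V\<close> \<open>w \<in> V\<close> by simp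
qed

lemma sum_dl1: "finite V \<Longrightarrow> w \<in> V \<Longrightarrow> (\<Sum>u\<in>V. dl w u) = 1"
  using sum_dl[of V w "\<lambda>_. 1"] by simp


definition ind :: "nat \<Rightarrow> nat set \<Rightarrow> real" where "ind p u = (if p \<in> u then 1 else 0)"

lemma card_inter_sum:
  assumes "u \<in> tri_V n" "v \<in> tri_V n"
  shows "real (2 - card (u \<inter> v)) = 2 - (\<Sum>p\<in>{1..n}. ind p u * ind p v)"
proof -
  have fu: "finite u" "card u = 2" "u \<subseteq> {1..n}" using V_mem[OF assms(1)] by auto
  have le: "card (u \<inter> v) \<le> 2" using fu card_mono[of u "u \<inter> v"] by auto
  have "(\<Sum>p\<in>{1..n}. ind p u * ind p v) = (\<Sum>p\<in>{1..n}. if p \<in> u \<inter> v then 1 else 0)"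
    by (rule sum.cong) (auto simp: ind_def)
  also have "\<dots> = (\<Sum>p\<in>{p \<in> {1..n}. p \<in> u \<inter> v}. 1)"
    by (simp only: sum.inter_filter[OF finite_atLeastAtMost])
  also have "{p \<in> {1..n}. p \<in> u \<inter> v} = u \<inter> v" using fu by auto
  finally have "(\<Sum>p\<in>{1..n}. ind p u * ind p v) = real (card (u \<inter> v))" by simp
  then show ?thesis using le by (simp add: of_nat_diff)
qed

lemma bilin:
  fixes z a b :: "nat set \<Rightarrow> real"
  shows "(\<Sum>u\<in>V. \<Sum>v\<in>V. z u * z v * (a u * b v + b u * a v)) =
     (\<Sum>u\<in>V. a u * z u) * (\<Sum>v\<in>V. b v * z v) + (\<Sum>u\<in>V. b u * z u) * (\<Sum>v\<in>V. a v * z v)"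
proof -
  have 1: "(\<Sum>u\<in>V. a u * z u) * (\<Sum>v\<in>V. b v * z v) = (\<Sum>u\<in>V. \<Sum>v\<in>V. z u * z v * (a u * b v))"
    by (simp add: sum_product mult_ac)
  have 2: "(\<Sum>u\<in>V. b u * z u) * (\<Sum>v\<in>V. a v * z v) = (\<Sum>u\<in>V. \<Sum>v\<in>V. z u * z v * (b u * a v))"
    unfolding sum_product by (intro sum.cong refl) (simp add: mult_ac)
  show ?thesis unfolding 1 2 by (simp add: sum.distrib distrib_left)
qed

lemma key:
  fixes a b :: "nat \<Rightarrow> nat set \<Rightarrow> real" and z0 :: "nat set \<Rightarrow> real"
  assumes n4: "n \<ge> 4" and tn: "t < n"
  and H: "\<forall>u\<in>tri_V n. \<forall>v\<in>tri_V n. real (2 - card (u \<inter> v)) = (\<Sum>i<t. a i u * b i v + b i u * a i v)"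
  and S0: "(\<Sum>u\<in>tri_V n. z0 u) = 0"
  and P0: "\<forall>p\<in>{1..n}. (\<Sum>u\<in>tri_V n. ind p u * z0 u) = 0"
  shows "\<forall>i<t. (\<Sum>u\<in>tri_V n. a i u * z0 u) = 0"
proof -
  define V where "V = tri_V n"
  have fV: "finite V" unfolding V_def by (rule finite_V)
  define bb where "bb j = (if j = 2 then 3 else (2::nat))" for j :: nat
  define G where "G j = (if j = 1 then z0 else (\<lambda>u. dl {j, bb j} u - dl {1, bb j} u))" for j :: nat
  have mem1: "{j, bb j} \<in> V" if "j \<in> {2..n}" for j
  proof -
    have "bb j \<in> {1..n}" "j \<noteq> bb j" "j \<in> {1..n}" using that n4 by (auto simp: bb_def)
    then show ?thesis unfolding V_def by (intro pair_V)
  qed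
  have mem2: "{1, bb j} \<in> V" if "j \<in> {2..n}" for j
    using that n4 by (intro pair_V[of _ n, folded V_def]) (auto simp: bb_def)
  obtain c where c: "\<exists>j\<in>{1..n}. c j \<noteq> 0"
    "\<forall>i\<in>{..<t}. (\<Sum>j\<in>{1..n}. (\<Sum>u\<in>V. a i u * G j u) * c j) = 0"
    using homog_solve[of "{..<t}" "{1..n}" "\<lambda>i j. \<Sum>u\<in>V. a i u * G j u"] tn by auto
  define z where "z u = (\<Sum>j\<in>{1..n}. c j * G j u)" for u
  have A: "(\<Sum>u\<in>V. a i u * z u) = 0" if "i < t" for i
  proof -
    have "(\<Sum>u\<in>V. a i u * z u) = (\<Sum>u\<in>V. \<Sum>j\<in>{1..n}. a i u * G j u * c j)"
      unfolding z_def by (simp add: sum_distrib_left mult_ac)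
    also have "\<dots> = (\<Sum>j\<in>{1..n}. \<Sum>u\<in>V. a i u * G j u * c j)" by (rule sum.swap)
    also have "\<dots> = (\<Sum>j\<in>{1..n}. (\<Sum>u\<in>V. a i u * G j u) * c j)"
      by (simp add: sum_distrib_right)
    finally show ?thesis using c(2) that by simp
  qed
  have Q1: "(\<Sum>u\<in>V. \<Sum>v\<in>V. z u * z v * real (2 - card (u \<inter> v))) = 0"
  proof -
    have "(\<Sum>u\<in>V. \<Sum>v\<in>V. z u * z v * real (2 - card (u \<inter> v))) =
          (\<Sum>u\<in>V. \<Sum>v\<in>V. \<Sum>i<t. z u * z v * (a i u * b i v + b i u * a i v))"
      using H unfolding V_def by (intro sum.cong refl) (simp add: sum_distrib_left)
    also have "\<dots> = (\<Sum>u\<in>V. \<Sum>i<t. \<Sum>v\<in>V. z u * z v * (a i u * b i v + b i u * a i v))"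
      by (rule sum.cong[OF refl], rule sum.swap)
    also have "\<dots> = (\<Sum>i<t. \<Sum>u\<in>V. \<Sum>v\<in>V. z u * z v * (a i u * b i v + b i u * a i v))"
      by (rule sum.swap)
    also have "\<dots> = 0"
      by (rule sum.neutral) (simp add: bilin A)
    finally show ?thesis .
  qed
  have Q2: "(\<Sum>u\<in>V. \<Sum>v\<in>V. z u * z v * real (2 - card (u \<inter> v))) =
       2 * (\<Sum>u\<in>V. z u) * (\<Sum>u\<in>V. z u) - (\<Sum>p\<in>{1..n}. (\<Sum>u\<in>V. ind p u * z u)^2)"
  proof -
    have "(\<Sum>u\<in>V. \<Sum>v\<in>V. z u * z v * real (2 - card (u \<inter> v))) =
          (\<Sum>u\<in>V. \<Sum>v\<in>V. 2 * (z u * z v) - (\<Sum>p\<in>{1..n}. (ind p u * z u) * (ind p v * z v)))"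
    proof (intro sum.cong refl)
      fix u v assume uv: "u \<in> V" "v \<in> V"
      show "z u * z v * real (2 - card (u \<inter> v)) = 2 * (z u * z v) - (\<Sum>p\<in>{1..n}. (ind p u * z u) * (ind p v * z v))"
        unfolding card_inter_sum[OF uv[unfolded V_def]]
        by (simp add: sum_distrib_left right_diff_distrib mult_ac)
    qed
    also have "\<dots> = 2 * ((\<Sum>u\<in>V. z u) * (\<Sum>u\<in>V. z u)) -
        (\<Sum>u\<in>V. \<Sum>v\<in>V. \<Sum>p\<in>{1..n}. (ind p u * z u) * (ind p v * z v))"
    proof -
      have sq: "(\<Sum>u\<in>V. \<Sum>v\<in>V. 2 * (z u * z v)) = 2 * ((\<Sum>u\<in>V. z u) * (\<Sum>u\<in>V. z u))"
        by (subst sum_product) (simp only: sum_distrib_left)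
      show ?thesis by (simp only: sum_subtractf sq)
    qed
    also have "(\<Sum>u\<in>V. \<Sum>v\<in>V. \<Sum>p\<in>{1..n}. (ind p u * z u) * (ind p v * z v)) =
        (\<Sum>p\<in>{1..n}. \<Sum>u\<in>V. \<Sum>v\<in>V. (ind p u * z u) * (ind p v * z v))"
      by (subst sum.swap, rule sum.swap)
    also have "\<dots> = (\<Sum>p\<in>{1..n}. (\<Sum>u\<in>V. ind p u * z u)^2)"
      by (simp add: power2_eq_square sum_product)
    finally show ?thesis by simp
  qed
  have SG: "(\<Sum>u\<in>V. G j u) = 0" if "j \<in> {1..n}" for j
  proof (cases "j = 1")
    case True
    then show ?thesis using S0 by (simp add: G_def V_def)
  next
    case False
    then have "j \<in> {2..n}" using that by auto
    then show ?thesis using False fV mem1 mem2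
      by (simp add: G_def sum_subtractf sum_dl1)
  qed
  have Sz: "(\<Sum>u\<in>V. z u) = 0"
  proof -
    have "(\<Sum>u\<in>V. z u) = (\<Sum>j\<in>{1..n}. c j * (\<Sum>u\<in>V. G j u))"
      unfolding z_def by (subst sum.swap) (simp add: sum_distrib_left)
    then show ?thesis using SG by simp
  qed
  have Pz: "(\<Sum>u\<in>V. ind p u * z u) = c p" if p: "p \<in> {2..n}" for p
  proof -
    have PG: "(\<Sum>u\<in>V. ind p u * G j u) = (if j = p then 1 else 0)" if j: "j \<in> {1..n}" for j
    proof (cases "j = 1")
      case True
      then show ?thesis using P0 p by (auto simp: G_def V_def)
    next
      case False
      then have j2: "j \<in> {2..n}" using j by auto
      have "(\<Sum>u\<in>V. ind p u * G j u) = (\<Sum>u\<in>V. ind p u * dl {j, bb j} u) - (\<Sum>u\<in>V. ind p u * dl {1, bb j} u)"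
        using False by (simp add: G_def sum_subtractf right_diff_distrib)
      also have "\<dots> = ind p {j, bb j} - ind p {1, bb j}"
        using sum_dl[OF fV mem1[OF j2]] sum_dl[OF fV mem2[OF j2]] by simp
      also have "\<dots> = (if j = p then 1 else 0)" using p j2 by (auto simp: ind_def bb_def)
      finally show ?thesis .
    qed
    have "(\<Sum>u\<in>V. ind p u * z u) = (\<Sum>j\<in>{1..n}. c j * (\<Sum>u\<in>V. ind p u * G j u))"
      unfolding z_def by (simp add: sum_distrib_left, subst sum.swap, simp add: mult_ac)
    also have "\<dots> = (\<Sum>j\<in>{1..n}. if j = p then c j else 0)"
      by (rule sum.cong) (auto simp: PG)
    also have "\<dots> = c p" using p by simp
    finally show ?thesis .
  qed
  have "(\<Sum>p\<in>{1..n}. (\<Sum>u\<in>V. ind p u * z u)^2) = 0" using Q1 Q2 Sz by simp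
  then have "\<forall>p\<in>{1..n}. (\<Sum>u\<in>V. ind p u * z u)^2 = 0"
    by (subst (asm) sum_nonneg_eq_0_iff) auto
  then have c0: "\<forall>p\<in>{2..n}. c p = 0" using Pz by auto
  have c1: "c 1 \<noteq> 0"
  proof -
    obtain j where j: "j \<in> {1..n}" "c j \<noteq> 0" using c(1) by blast
    show ?thesis
    proof (cases "j = 1")
      case True then show ?thesis using j by simp
    next
      case False then have "j \<in> {2..n}" using j by auto
      then show ?thesis using c0 j by auto
    qed
  qed
  have zz: "z u = c 1 * z0 u" for u
  proof -
    have "z u = (\<Sum>j\<in>{1..n}. if j = 1 then c 1 * z0 u else 0)"
      unfolding z_def using c0 by (intro sum.cong refl) (auto simp: G_def)
    then show ?thesis using n4 by simp
  qed
  show ?thesis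
  proof (intro allI impI)
    fix i assume "i < t"
    from A[OF this] have "c 1 * (\<Sum>u\<in>V. a i u * z0 u) = 0"
      by (simp add: zz sum_distrib_left mult_ac)
    then show "(\<Sum>u\<in>tri_V n. a i u * z0 u) = 0" using c1 V_def by simp
  qed
qed


lemma sum_cyc:
  assumes "finite V" "w1 \<in> V" "w2 \<in> V" "w3 \<in> V" "w4 \<in> V"
  shows "(\<Sum>u\<in>V. h u * (dl w1 u + dl w2 u - dl w3 u - dl w4 u)) = h w1 + h w2 - h w3 - h w4"
  using assms by (simp add: distrib_left right_diff_distrib sum.distrib sum_subtractf sum_dl)

lemma parity4:
  "ia s12 + ia s34 - ia s13 - ia s24 = 0 \<Longrightarrow> ia s12 + ia s34 - ia s14 - ia s23 = 0 \<Longrightarrow>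
   ib s12 + ib s34 - ib s13 - ib s24 = 0 \<Longrightarrow> ib s12 + ib s34 - ib s14 - ib s23 = 0 \<Longrightarrow>
   ia s12 * ib s13 + ib s12 * ia s13 + (ia s12 * ib s14 + ib s12 * ia s14) + (ia s13 * ib s14 + ib s13 * ia s14) \<in> {0, 2}"
  by (cases s12; cases s13; cases s14; cases s23; cases s24; cases s34) (simp_all add: ia_def ib_def)

lemma even_contra:
  fixes \<phi> :: "nat \<Rightarrow> real"
  assumes "\<forall>i<t. \<phi> i \<in> {0, 2}" "(\<Sum>i<t. \<phi> i) = 3"
  shows False
proof -
  define m where "m i = (if \<phi> i = 0 then 0 else 2 :: nat)" for i
  have "(\<Sum>i<t. \<phi> i) = (\<Sum>i<t. real (m i))"
    using assms(1) by (intro sum.cong refl) (auto simp: m_def)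
  then have "real (\<Sum>i<t. m i) = 3" using assms(2) by simp
  then have "(\<Sum>i<t. m i) = 3" by linarith
  moreover have "2 dvd (\<Sum>i<t. m i)" by (rule dvd_sum) (simp add: m_def)
  ultimately show False by simp
qed

theorem theorem17:
  fixes n :: nat
  assumes "n \<ge> 4"
  shows "enat n \<le> addressing_number (tri_V n) tri_E"
  unfolding addressing_number_def
proof (rule INF_greatest)
  have n4: "n \<ge> 4" by (rule assms)
  fix t assume "t \<in> {t. \<exists>f. is_addressing (tri_V n) tri_E t f}"
  then obtain f where f: "is_addressing (tri_V n) tri_E t f" by auto
  show "enat n \<le> enat t"
  proof (rule ccontr)
    assume "\<not> enat n \<le> enat t"
    then have tn: "t < n" by simp
    define a where "a i u = ia (f u ! i)" for i u
    define b where "b i u = ib (f u ! i)" for i u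
    have H: "\<forall>u\<in>tri_V n. \<forall>v\<in>tri_V n. real (2 - card (u \<inter> v)) = (\<Sum>i<t. a i u * b i v + b i u * a i v)"
    proof (intro ballI)
      fix u v assume u: "u \<in> tri_V n" and v: "v \<in> tri_V n"
      have "real (2 - card (u \<inter> v)) = real (graph_dist (tri_V n) tri_E u v)"
        using dist_tri[OF u v] by simp
      also have "\<dots> = real (addr_dist t (f u) (f v))" using f u v by (simp add: is_addressing_def)
      also have "\<dots> = (\<Sum>i<t. a i u * b i v + b i u * a i v)" by (simp add: addr_dist_sum a_def b_def)
      finally show "real (2 - card (u \<inter> v)) = (\<Sum>i<t. a i u * b i v + b i u * a i v)" .
    qed
    have H': "\<forall>u\<in>tri_V n. \<forall>v\<in>tri_V n. real (2 - card (u \<inter> v)) = (\<Sum>i<t. b i u * a i v + a i u * b i v)"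
    proof (intro ballI)
      fix u v assume u: "u \<in> tri_V n" and v: "v \<in> tri_V n"
      have "(\<Sum>i<t. b i u * a i v + a i u * b i v) = (\<Sum>i<t. a i u * b i v + b i u * a i v)"
        by (intro sum.cong refl) simp
      then show "real (2 - card (u \<inter> v)) = (\<Sum>i<t. b i u * a i v + a i u * b i v)" using H u v by simp
    qed
    have fV: "finite (tri_V n)" by (rule finite_V)
    have m12: "{1,2} \<in> tri_V n" using n4 by (intro pair_V) auto
    have m13: "{1,3} \<in> tri_V n" using n4 by (intro pair_V) auto
    have m14: "{1,4} \<in> tri_V n" using n4 by (intro pair_V) auto
    have m23: "{2,3} \<in> tri_V n" using n4 by (intro pair_V) auto
    have m24: "{2,4} \<in> tri_V n" using n4 by (intro pair_V) auto
    have m34: "{3,4} \<in> tri_V n" using n4 by (intro pair_V) auto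
    define z1 where "z1 u = dl {1,2} u + dl {3,4} u - dl {1,3} u - dl {2,4} u" for u
    define z2 where "z2 u = dl {1,2} u + dl {3,4} u - dl {1,4} u - dl {2,3} u" for u
    have S1: "(\<Sum>u\<in>tri_V n. z1 u) = 0"
      using sum_cyc[OF fV m12 m34 m13 m24, of "\<lambda>_. 1"] by (simp add: z1_def)
    have S2: "(\<Sum>u\<in>tri_V n. z2 u) = 0"
      using sum_cyc[OF fV m12 m34 m14 m23, of "\<lambda>_. 1"] by (simp add: z2_def)
    have P1: "\<forall>p\<in>{1..n}. (\<Sum>u\<in>tri_V n. ind p u * z1 u) = 0"
      using sum_cyc[OF fV m12 m34 m13 m24] by (auto simp: z1_def ind_def)
    have P2: "\<forall>p\<in>{1..n}. (\<Sum>u\<in>tri_V n. ind p u * z2 u) = 0"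
      using sum_cyc[OF fV m12 m34 m14 m23] by (auto simp: z2_def ind_def)
    note ka1 = key[OF n4 tn H S1 P1]
    note ka2 = key[OF n4 tn H S2 P2]
    note kb1 = key[OF n4 tn H' S1 P1]
    note kb2 = key[OF n4 tn H' S2 P2]
    define \<phi> where "\<phi> i = a i {1,2} * b i {1,3} + b i {1,2} * a i {1,3} + (a i {1,2} * b i {1,4} + b i {1,2} * a i {1,4}) + (a i {1,3} * b i {1,4} + b i {1,3} * a i {1,4})" for i
    have phi: "\<forall>i<t. \<phi> i \<in> {0, 2}"
    proof (intro allI impI)
      fix i assume i: "i < t"
      have e1: "a i {1,2} + a i {3,4} - a i {1,3} - a i {2,4} = 0"
        using ka1 i sum_cyc[OF fV m12 m34 m13 m24, of "a i"] by (simp add: z1_def)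
      have e2: "a i {1,2} + a i {3,4} - a i {1,4} - a i {2,3} = 0"
        using ka2 i sum_cyc[OF fV m12 m34 m14 m23, of "a i"] by (simp add: z2_def)
      have e3: "b i {1,2} + b i {3,4} - b i {1,3} - b i {2,4} = 0"
        using kb1 i sum_cyc[OF fV m12 m34 m13 m24, of "b i"] by (simp add: z1_def)
      have e4: "b i {1,2} + b i {3,4} - b i {1,4} - b i {2,3} = 0"
        using kb2 i sum_cyc[OF fV m12 m34 m14 m23, of "b i"] by (simp add: z2_def)
      show "\<phi> i \<in> {0, 2}"
        using parity4[OF e1[unfolded a_def] e2[unfolded a_def] e3[unfolded b_def] e4[unfolded b_def]]
        by (simp add: \<phi>_def a_def b_def)
    qed
    have d1: "(\<Sum>i<t. a i {1,2} * b i {1,3} + b i {1,2} * a i {1,3}) = 1"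
    proof -
      have "{1,2::nat} \<inter> {1,3} = {1}" by auto
      then show ?thesis using H m12 m13 by force
    qed
    have d2: "(\<Sum>i<t. a i {1,2} * b i {1,4} + b i {1,2} * a i {1,4}) = 1"
    proof -
      have "{1,2::nat} \<inter> {1,4} = {1}" by auto
      then show ?thesis using H m12 m14 by force
    qed
    have d3: "(\<Sum>i<t. a i {1,3} * b i {1,4} + b i {1,3} * a i {1,4}) = 1"
    proof -
      have "{1,3::nat} \<inter> {1,4} = {1}" by auto
      then show ?thesis using H m13 m14 by force
    qed
    have "(\<Sum>i<t. \<phi> i) = (\<Sum>i<t. a i {1,2} * b i {1,3} + b i {1,2} * a i {1,3}) +
        (\<Sum>i<t. a i {1,2} * b i {1,4} + b i {1,2} * a i {1,4}) + (\<Sum>i<t. a i {1,3} * b i {1,4} + b i {1,3} * a i {1,4})"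
      unfolding \<phi>_def by (simp only: sum.distrib)
    then have "(\<Sum>i<t. \<phi> i) = 3" using d1 d2 d3 by simp
    then show False using even_contra phi by blast
  qed
qed

end
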